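(* Let $d\ge 2$ and let $P\subset\mathbb{R}^d$ be a generic convex simplicial $d$-dimensional polytope. Then there exist at least two Delaunay BM-ears and at least two upper Delaunay BM-ears of $P$.
   Context: $P$ is generic if no $d+2$ of its vertices lie on a common $(d-1)$-dimensional sphere and $P$ is not a $d$-simplex. Let $V$ be the vertex set of $P$ and $f:\mathbb{R}^d\to\mathbb{R}^{d+1}$, $f(x_1,\dots,x_d)=(x_1,\dots,x_d,x_1^2+\dots+x_d^2)$. Let $P'$ be the convex hull of $f(V)$; it is a $(d+1)$-dimensional simplicial polytope with vertex set $f(V)$, and no facet of $P'$ has an outer normal with zero last coordinate. A facet of $P'$ is lower if its outer normal has negative last coordinate and upper if it is positive. The orthogonal projections (forgetting the last coordinate) of the lower facets form the Delaunay triangulation $DT(P)$ of $P$ (the simplices with vertices in $V$ whose circumsphere has no vertex of $P$ inside), and those of the upper facets form the upper Delaunay triangulation $UDT(P)$ (simplices whose circumsphere has all other vertices of $P$ inside). A facet $F$ of $P'$ is visible from a point $A$ if $A$ and $P'$ lie in opposite open half-spaces of the hyperplane $\mathrm{aff}(F)$. A simplex of $DT(P)$ is a Delaunay BM-ear if it is the projection of a lower facet $F$ of $P'$ that is the last facet of a Bruggesser–Mani shelling of the complex of lower facets, i.e. there exist a point $A\in\mathbb{R}^{d+1}$ from which exactly the lower facets of $P'$ are visible and a point $O$ in the interior of $P'$ such that the segment $OA$ meets the hyperplanes spanned by the lower facets in distinct points and $\mathrm{aff}(F)$ is the last of them met when moving from $O$ to $A$. Upper Delaunay BM-ears are defined in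 the same way using upper facets, $UDT(P)$, and points $A$ from which exactly the upper facets of $P'$ are visible. *)

theory Defs
  imports "HOL-Analysis.Analysis"
begin

definition vertices :: "'a::euclidean_space set \<Rightarrow> 'a set" where
  "vertices P = {v. v extreme_point_of P}"

definition simplicial_polytope :: "'a::euclidean_space set \<Rightarrow> bool" where
  "simplicial_polytope P \<longleftrightarrow> polytope P \<and>
     (\<forall>F. F facet_of P \<longrightarrow> (int DIM('a) - 1) simplex F)"

definition generic_polytope :: "'a::euclidean_space set \<Rightarrow> bool" where
  "generic_polytope P \<longleftrightarrow>
     (\<forall>W. W \<subseteq> vertices P \<and> card W = DIM('a) + 2 \<longrightarrow>
          \<not> (\<exists>c r. W \<subseteq> sphere c r)) \<and>
     \<not> (int DIM('a) simplex P)"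

text \<open>The lifting map f(x) = (x, |x|^2) into R^d x R = R^(d+1); the last
  coordinate is the second component.\<close>
definition lift :: "'a::euclidean_space \<Rightarrow> 'a \<times> real" where
  "lift x = (x, (norm x)\<^sup>2)"

definition lifted_polytope :: "'a::euclidean_space set \<Rightarrow> ('a \<times> real) set" where
  "lifted_polytope P = convex hull (lift ` vertices P)"

definition lower_facet :: "('a::euclidean_space \<times> real) set \<Rightarrow> ('a \<times> real) set \<Rightarrow> bool" where
  "lower_facet Q F \<longleftrightarrow> F facet_of Q \<and>
     (\<exists>a b. snd a < 0 \<and> Q \<subseteq> {x. inner a x \<le> b} \<and> F = Q \<inter> {x. inner a x = b})"

definition upper_facet :: "('a::euclidean_space \<times> real) set \<Rightarrow> ('a \<times> real) set \<Rightarrow> bool" where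
  "upper_facet Q F \<longleftrightarrow> F facet_of Q \<and>
     (\<exists>a b. snd a > 0 \<and> Q \<subseteq> {x. inner a x \<le> b} \<and> F = Q \<inter> {x. inner a x = b})"

definition visible_from :: "'b::euclidean_space set \<Rightarrow> 'b set \<Rightarrow> 'b \<Rightarrow> bool" where
  "visible_from Q F A \<longleftrightarrow>
     (\<exists>a b. a \<noteq> 0 \<and> affine hull F = {x. inner a x = b} \<and>
            Q \<subseteq> {x. inner a x \<le> b} \<and> inner a A > b)"

text \<open>F (satisfying the class predicate L, e.g. lower facets) is the last facet of a
  Bruggesser--Mani shelling of the facets in class L.\<close>
definition BM_last :: "'b::euclidean_space set \<Rightarrow> ('b set \<Rightarrow> bool) \<Rightarrow> 'b set \<Rightarrow> bool" where
  "BM_last Q L F \<longleftrightarrow> L F \<and>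
     (\<exists>A C. (\<forall>G. G facet_of Q \<longrightarrow> (visible_from Q G A \<longleftrightarrow> L G)) \<and>
            C \<in> interior Q \<and>
            (\<exists>p. (\<forall>G. L G \<longrightarrow> closed_segment C A \<inter> affine hull G = {p G}) \<and>
                 inj_on p {G. L G} \<and>
                 (\<forall>G. L G \<and> G \<noteq> F \<longrightarrow> dist C (p G) < dist C (p F))))"

definition delaunay_BM_ear :: "'a::euclidean_space set \<Rightarrow> 'a set \<Rightarrow> bool" where
  "delaunay_BM_ear P S \<longleftrightarrow>
     (\<exists>F. S = fst ` F \<and> BM_last (lifted_polytope P) (lower_facet (lifted_polytope P)) F)"

definition upper_delaunay_BM_ear :: "'a::euclidean_space set \<Rightarrow> 'a set \<Rightarrow> bool" where
  "upper_delaunay_BM_ear P S \<longleftrightarrow>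
     (\<exists>F. S = fst ` F \<and> BM_last (lifted_polytope P) (upper_facet (lifted_polytope P)) F)"

end

theory Submission
  imports Defs
begin

lemma basic_setup:
  fixes P :: "'a::euclidean_space set"
  assumes "convex P" "polytope P"
  shows "finite (vertices P)" "P = convex hull (vertices P)"
    "polytope (lifted_polytope P)" "fst ` lifted_polytope P = P"
proof -
  show fin: "finite (vertices P)"
    using finite_polyhedron_extreme_points[OF polytope_imp_polyhedron[OF assms(2)]]
    by (simp add: vertices_def)
  show PV: "P = convex hull (vertices P)"
    using Krein_Milman_Minkowski[OF polytope_imp_compact[OF assms(2)] assms(1)]
    by (simp add: vertices_def)
  show "polytope (lifted_polytope P)"
    unfolding lifted_polytope_def by (rule polytope_convex_hull) (use fin in auto)
  have "fst ` lifted_polytope P = convex hull (fst ` lift ` vertices P)"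
    unfolding lifted_polytope_def
    by (rule convex_hull_linear_image) (simp add: bounded_linear_fst bounded_linear.linear)
  also have "fst ` lift ` vertices P = vertices P" by (force simp: lift_def image_image)
  finally show "fst ` lifted_polytope P = P" using PV by simp
qed

lemma full_dim:
  fixes P :: "'a::euclidean_space set"
  assumes "convex P" "polytope P" "aff_dim P = int DIM('a)" "generic_polytope P"
  shows "interior (lifted_polytope P) \<noteq> {}"
proof -
  let ?V = "vertices P"
  note bs = basic_setup[OF assms(1,2)]
  have affV: "aff_dim ?V = int DIM('a)"
    using assms(3) bs(2) by (metis aff_dim_convex_hull)
  have cardV: "card ?V \<ge> DIM('a) + 2"
  proof (rule ccontr)
    assume "\<not> ?thesis"
    moreover have "aff_dim ?V \<le> int (card ?V) - 1" using aff_dim_le_card[OF bs(1)] by simp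
    ultimately have "int (card ?V) = int DIM('a) + 1" using affV by linarith
    then have "\<not> affine_dependent ?V" using affine_independent_iff_card[of ?V] bs(1) affV by linarith
    then have "int DIM('a) simplex P"
      unfolding simplex_def using bs(2) \<open>int (card ?V) = int DIM('a) + 1\<close> by blast
    then show False using assms(4) by (simp add: generic_polytope_def)
  qed
  have "affine hull (lift ` ?V) = UNIV"
  proof (rule ccontr)
    assume "affine hull (lift ` ?V) \<noteq> UNIV"
    then have "aff_dim (lift ` ?V) < DIM('a \<times> real)"
      by (metis aff_dim_eq_full aff_dim_le_DIM order_less_le)
    then obtain a b where a: "a \<noteq> 0" "lift ` ?V \<subseteq> {x. a \<bullet> x = b}"
      by (rule aff_lowdim_subset_hyperplane)
    obtain ax t0 where aeq: "a = (ax, t0)" by (cases a)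
    have eq: "ax \<bullet> v + t0 * (norm v)\<^sup>2 = b" if "v \<in> ?V" for v
      using a(2) that by (auto simp: lift_def aeq)
    show False
    proof (cases "t0 = 0")
      case True
      then have "ax \<noteq> 0" using a aeq by (auto simp: zero_prod_def)
      have "?V \<subseteq> {x. ax \<bullet> x = b}" using eq True by auto
      then have "aff_dim ?V \<le> aff_dim {x. ax \<bullet> x = b}" by (rule aff_dim_subset)
      then show False using affV \<open>ax \<noteq> 0\<close> by simp
    next
      case False
      define c where "c = - (1 / (2 * t0)) *\<^sub>R ax"
      define K where "K = b / t0 + (norm c)\<^sup>2"
      have sq: "(norm (v - c))\<^sup>2 = K" if "v \<in> ?V" for v
      proof -
        have "(norm (v - c))\<^sup>2 = (norm v)\<^sup>2 - 2 * (c \<bullet> v) + (norm c)\<^sup>2"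
          by (simp add: power2_norm_eq_inner inner_diff_left inner_diff_right inner_commute)
        also have "c \<bullet> v = - (ax \<bullet> v) / (2 * t0)" by (simp add: c_def)
        also have "ax \<bullet> v = b - t0 * (norm v)\<^sup>2" using eq[OF that] by simp
        finally show ?thesis using False by (simp add: K_def field_simps)
      qed
      obtain W where W: "W \<subseteq> ?V" "card W = DIM('a) + 2" "finite W"
        using obtain_subset_with_card_n[OF cardV] by metis
      have "W \<subseteq> sphere c (sqrt K)"
      proof
        fix w assume "w \<in> W"
        then have "(norm (w - c))\<^sup>2 = K" using sq W by auto
        then have "norm (w - c) = sqrt K" by (metis norm_ge_zero real_sqrt_abs abs_of_nonneg)
        then show "w \<in> sphere c (sqrt K)" by (simp add: dist_norm norm_minus_commute)
      qed
      then show False using assms(4) W unfolding generic_polytope_def by blast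
    qed
  qed
  then have "affine hull (lifted_polytope P) = UNIV"
    unfolding lifted_polytope_def by (simp add: affine_hull_convex_hull)
  moreover have "lifted_polytope P \<noteq> {}"
  proof -
    have "?V \<noteq> {}" using cardV by auto
    then show ?thesis by (simp add: lifted_polytope_def)
  qed
  moreover have "convex (lifted_polytope P)" by (simp add: lifted_polytope_def)
  ultimately show ?thesis
    using rel_interior_interior rel_interior_eq_empty by metis
qed


locale setting =
  fixes Q :: "('a::euclidean_space \<times> real) set" and V :: "'a set"
  assumes finV: "finite V" and Qdef: "Q = convex hull (lift ` V)"
    and intQ: "interior Q \<noteq> {}"
    and fiber: "\<And>z w. z \<in> Q \<Longrightarrow> w \<in> V \<Longrightarrow> fst z = w \<Longrightarrow> z = lift w"
begin

definition sfacet :: "real \<Rightarrow> ('a \<times> real) set \<Rightarrow> bool" where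
  "sfacet \<sigma> G \<longleftrightarrow> G facet_of Q \<and>
     (\<exists>a b. \<sigma> * snd a < 0 \<and> Q \<subseteq> {x. inner a x \<le> b} \<and> G = Q \<inter> {x. inner a x = b})"

definition rep :: "real \<Rightarrow> ('a \<times> real) set \<Rightarrow> ('a \<times> real) \<times> real" where
  "rep \<sigma> G = (SOME ab. \<sigma> * snd (fst ab) < 0 \<and> Q \<subseteq> {x. inner (fst ab) x \<le> snd ab}
        \<and> G = Q \<inter> {x. inner (fst ab) x = snd ab})"

definition ell :: "real \<Rightarrow> ('a \<times> real) set \<Rightarrow> 'a \<Rightarrow> real" where
  "ell \<sigma> G y = (snd (rep \<sigma> G) - inner (fst (fst (rep \<sigma> G))) y) / snd (fst (rep \<sigma> G))"

lemma polyQ: "polytope Q" using finV by (simp add: Qdef polytope_convex_hull)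
lemma polyhQ: "polyhedron Q" by (simp add: polyQ polytope_imp_polyhedron)
lemma convQ: "convex Q" by (simp add: Qdef)
lemma compQ: "compact Q" by (simp add: polyQ polytope_imp_compact)
lemma closedQ: "closed Q" by (simp add: compQ compact_imp_closed)
lemma affQ: "affine hull Q = UNIV" using intQ affine_hull_nonempty_interior by blast
lemma aff_dimQ: "aff_dim Q = int DIM('a \<times> real)" using affQ aff_dim_eq_full by blast
lemma liftQ: "w \<in> V \<Longrightarrow> lift w \<in> Q" by (simp add: Qdef hull_inc)
lemma finFs: "finite {G. sfacet \<sigma> G}"
  by (rule finite_subset[OF _ finite_polyhedron_facets[OF polyhQ]]) (auto simp: sfacet_def)

lemma rep_props:
  assumes "sfacet \<sigma> G"
  shows "\<sigma> * snd (fst (rep \<sigma> G)) < 0" "Q \<subseteq> {x. inner (fst (rep \<sigma> G)) x \<le> snd (rep \<sigma> G)}"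
    "G = Q \<inter> {x. inner (fst (rep \<sigma> G)) x = snd (rep \<sigma> G)}"
proof -
  from assms obtain a b where "\<sigma> * snd a < 0 \<and> Q \<subseteq> {x. inner a x \<le> b} \<and> G = Q \<inter> {x. inner a x = b}"
    by (auto simp: sfacet_def)
  then have "\<exists>ab. \<sigma> * snd (fst ab) < 0 \<and> Q \<subseteq> {x. inner (fst ab) x \<le> snd ab}
        \<and> G = Q \<inter> {x. inner (fst ab) x = snd ab}" by (intro exI[of _ "(a,b)"]) auto
  from someI_ex[OF this] show "\<sigma> * snd (fst (rep \<sigma> G)) < 0" "Q \<subseteq> {x. inner (fst (rep \<sigma> G)) x \<le> snd (rep \<sigma> G)}"
    "G = Q \<inter> {x. inner (fst (rep \<sigma> G)) x = snd (rep \<sigma> G)}"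
    unfolding rep_def by auto
qed

lemma sig: "(\<sigma>::real) \<in> {1, -1} \<Longrightarrow> \<sigma> * \<sigma> = 1 \<and> \<bar>\<sigma>\<bar> = 1" by auto

lemma hyp_eq:
  assumes "sfacet \<sigma> G" "\<sigma> \<in> {1,-1}"
  shows "inner (fst (rep \<sigma> G)) z = snd (rep \<sigma> G) \<longleftrightarrow> snd z = ell \<sigma> G (fst z)"
    "inner (fst (rep \<sigma> G)) z \<le> snd (rep \<sigma> G) \<longleftrightarrow> \<sigma> * ell \<sigma> G (fst z) \<le> \<sigma> * snd z"
    "inner (fst (rep \<sigma> G)) z < snd (rep \<sigma> G) \<longleftrightarrow> \<sigma> * ell \<sigma> G (fst z) < \<sigma> * snd z"
proof -
  obtain ax t b where r: "rep \<sigma> G = ((ax, t), b)" by (metis prod.collapse)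
  obtain y s where z: "z = (y, s)" by (cases z)
  have t: "\<sigma> * t < 0" using rep_props(1)[OF assms(1)] r by simp
  have t0: "t \<noteq> 0" using t by auto
  have e: "ell \<sigma> G y = (b - inner ax y) / t" by (simp add: ell_def r)
  have key: "inner ax y + t * s - b = t * (s - ell \<sigma> G y)" using t0 by (simp add: e field_simps)
  show "inner (fst (rep \<sigma> G)) z = snd (rep \<sigma> G) \<longleftrightarrow> snd z = ell \<sigma> G (fst z)"
    using key t0 by (simp add: r z) (smt (verit) mult_eq_0_iff)
  have s1: "t = - \<sigma> * \<bar>t\<bar>" using assms(2) t by auto
  show "inner (fst (rep \<sigma> G)) z \<le> snd (rep \<sigma> G) \<longleftrightarrow> \<sigma> * ell \<sigma> G (fst z) \<le> \<sigma> * snd z"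
  proof -
    have "inner ax y + t * s \<le> b \<longleftrightarrow> t * (s - ell \<sigma> G y) \<le> 0" using key by linarith
    also have "\<dots> \<longleftrightarrow> \<sigma> * ell \<sigma> G y \<le> \<sigma> * s"
      using assms(2) t by (auto simp: mult_le_0_iff algebra_simps)
    finally show ?thesis by (simp add: r z)
  qed
  show "inner (fst (rep \<sigma> G)) z < snd (rep \<sigma> G) \<longleftrightarrow> \<sigma> * ell \<sigma> G (fst z) < \<sigma> * snd z"
  proof -
    have "inner ax y + t * s < b \<longleftrightarrow> t * (s - ell \<sigma> G y) < 0" using key by linarith
    also have "\<dots> \<longleftrightarrow> \<sigma> * ell \<sigma> G y < \<sigma> * s"
      using assms(2) t by (auto simp: mult_less_0_iff algebra_simps)
    finally show ?thesis by (simp add: r z)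
  qed
qed

lemma rep_nz: "sfacet \<sigma> G \<Longrightarrow> fst (rep \<sigma> G) \<noteq> 0"
  using rep_props(1)[of \<sigma> G] by (auto simp: zero_prod_def)

lemma aff_hull_facet:
  assumes "G facet_of Q" "a \<noteq> 0" "G \<subseteq> {x. inner a x = b}"
  shows "affine hull G = {x. inner a x = b}"
proof (rule affine_dim_equal)
  show "affine hull G \<subseteq> {x. inner a x = b}"
    by (rule hull_minimal) (use assms(3) affine_hyperplane in auto)
  show "affine (affine hull G)" by simp
  show "affine {x. inner a x = b}" by (rule affine_hyperplane)
  show "affine hull G \<noteq> {}" using assms(1) by (auto simp: facet_of_def)
  show "aff_dim (affine hull G) = aff_dim {x. inner a x = b}"
    using assms(1,2) aff_dimQ by (simp add: facet_of_def)
qed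

lemma hull_sfacet:
  assumes "sfacet \<sigma> G"
  shows "affine hull G = {x. inner (fst (rep \<sigma> G)) x = snd (rep \<sigma> G)}"
  using assms rep_props[OF assms] rep_nz[OF assms]
  by (intro aff_hull_facet) (auto simp: sfacet_def)

lemma interior_strict:
  assumes "Q \<subseteq> {x. inner a x \<le> b}" "a \<noteq> 0" "C \<in> interior Q"
  shows "inner a C < b"
  using interior_mono[OF assms(1)] assms(2,3) by auto

lemma ell_Q: "sfacet \<sigma> G \<Longrightarrow> \<sigma> \<in> {1,-1} \<Longrightarrow> z \<in> Q \<Longrightarrow> \<sigma> * ell \<sigma> G (fst z) \<le> \<sigma> * snd z"
  using rep_props(2) hyp_eq(2) by blast

lemma ell_G: "sfacet \<sigma> G \<Longrightarrow> \<sigma> \<in> {1,-1} \<Longrightarrow> z \<in> Q \<Longrightarrow> z \<in> G \<longleftrightarrow> snd z = ell \<sigma> G (fst z)"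
  using rep_props(3) hyp_eq(1) by blast

lemma ell_int: "sfacet \<sigma> G \<Longrightarrow> \<sigma> \<in> {1,-1} \<Longrightarrow> z \<in> interior Q \<Longrightarrow> \<sigma> * ell \<sigma> G (fst z) < \<sigma> * snd z"
  using rep_props(2) hyp_eq(3) interior_strict rep_nz by blast

lemma ell_linear: "ell \<sigma> G y = snd (rep \<sigma> G) / snd (fst (rep \<sigma> G))
     - inner (fst (fst (rep \<sigma> G)) /\<^sub>R snd (fst (rep \<sigma> G))) y"
  by (simp add: ell_def diff_divide_distrib divide_inverse algebra_simps)

lemma ell_cont: "continuous_on UNIV (ell \<sigma> G)"
  unfolding ell_linear by (intro continuous_intros)

end

context setting begin

lemma sig_abs: "(\<sigma>::real) \<in> {1,-1} \<Longrightarrow> \<bar>\<sigma> * r\<bar> = \<bar>r\<bar>"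
  by (auto simp: abs_mult)

lemma hull_sfacet_ell:
  assumes "sfacet \<sigma> G" "\<sigma> \<in> {1,-1}"
  shows "affine hull G = {z. snd z = ell \<sigma> G (fst z)}"
  using hull_sfacet[OF assms(1)] hyp_eq(1)[OF assms] by auto

lemma ear_for_x:
  assumes s: "\<sigma> \<in> {1,-1}" and C: "(x,h) \<in> interior Q"
    and dst: "\<And>G G'. sfacet \<sigma> G \<Longrightarrow> sfacet \<sigma> G' \<Longrightarrow> ell \<sigma> G x = ell \<sigma> G' x \<Longrightarrow> G = G'"
    and F: "sfacet \<sigma> F" and Fmin: "\<And>G. sfacet \<sigma> G \<Longrightarrow> \<sigma> * ell \<sigma> F x \<le> \<sigma> * ell \<sigma> G x"
  shows "BM_last Q (sfacet \<sigma>) F"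
proof -
  define T where "T = 1 + (\<Sum>G\<in>{G. sfacet \<sigma> G}. \<bar>h - ell \<sigma> G x\<bar>)"
  have Tbig: "\<bar>h - ell \<sigma> G x\<bar> < T" if "sfacet \<sigma> G" for G
  proof -
    have "\<bar>h - ell \<sigma> G x\<bar> \<le> (\<Sum>G\<in>{G. sfacet \<sigma> G}. \<bar>h - ell \<sigma> G x\<bar>)"
      by (rule member_le_sum) (use that finFs in auto)
    then show ?thesis by (simp add: T_def)
  qed
  have T0: "T > 0" unfolding T_def by (smt (verit) sum_nonneg abs_ge_zero)
  define A where "A = (x, h - \<sigma> * T)"
  define C where "C = (x, h)"
  have CQ: "C \<in> Q" using C interior_subset C_def by blast
  have ss: "\<sigma> * \<sigma> = 1" using s by auto
  have pos: "0 < \<sigma> * (h - ell \<sigma> G x)" if "sfacet \<sigma> G" for G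
    using ell_int[OF that s C] by (simp add: algebra_simps)
  have lt: "\<sigma> * (h - ell \<sigma> G x) < T" if "sfacet \<sigma> G" for G
    using Tbig[OF that] sig_abs[OF s, of "h - ell \<sigma> G x"] by linarith
  have vis: "visible_from Q G A \<longleftrightarrow> sfacet \<sigma> G" if G: "G facet_of Q" for G
  proof
    assume sG: "sfacet \<sigma> G"
    have "\<not> (\<sigma> * ell \<sigma> G (fst A) \<le> \<sigma> * snd A)"
      using lt[OF sG] ss by (simp add: A_def algebra_simps)
    then have "inner (fst (rep \<sigma> G)) A > snd (rep \<sigma> G)"
      using hyp_eq(2)[OF sG s, of A] by linarith
    then show "visible_from Q G A"
      unfolding visible_from_def using rep_nz[OF sG] hull_sfacet[OF sG] rep_props(2)[OF sG] by blast
  next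
    assume vA: "visible_from Q G A"
    show "sfacet \<sigma> G"
    proof (rule ccontr)
      assume nG: "\<not> sfacet \<sigma> G"
      obtain a b where ab: "a \<noteq> 0" "Q \<subseteq> {x. a \<bullet> x \<le> b}" "G = Q \<inter> {x. a \<bullet> x = b}"
        using facet_of_polyhedron[OF polyhQ G] by metis
      have sa: "\<sigma> * snd a \<ge> 0"
      proof (rule ccontr)
        assume "\<not> \<sigma> * snd a \<ge> 0"
        then have "\<sigma> * snd a < 0" by simp
        then have "sfacet \<sigma> G" unfolding sfacet_def using G ab by blast
        then show False using nG by blast
      qed
      have aC: "a \<bullet> C < b" using interior_strict[OF ab(2) ab(1)] C C_def by blast
      have "a \<bullet> A = a \<bullet> C - T * (\<sigma> * snd a)"
        by (cases a) (simp add: A_def C_def algebra_simps)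
      then have aA: "a \<bullet> A \<le> a \<bullet> C" using sa T0 by (simp add: mult_nonneg_nonneg)
      obtain a' b' where a': "a' \<noteq> 0" "affine hull G = {x. a' \<bullet> x = b'}"
        "Q \<subseteq> {x. a' \<bullet> x \<le> b'}" "a' \<bullet> A > b'"
        using vA unfolding visible_from_def by blast
      have a'C: "a' \<bullet> C \<le> b'" using a'(3) CQ by auto
      define u where "u = (b' - a' \<bullet> C) / (a' \<bullet> A - a' \<bullet> C)"
      have den: "a' \<bullet> A - a' \<bullet> C > 0" using a'C a'(4) by linarith
      have u0: "0 \<le> u" using den a'C by (simp add: u_def)
      have u1: "u \<le> 1" using den a'(4) by (simp add: u_def)
      define y where "y = C + u *\<^sub>R (A - C)"
      have "a' \<bullet> y = a' \<bullet> C + u * (a' \<bullet> A - a' \<bullet> C)"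
        by (simp add: y_def inner_add_right inner_diff_right)
      also have "\<dots> = b'" using den by (simp add: u_def)
      finally have "y \<in> affine hull G" using a'(2) by simp
      moreover have "affine hull G \<subseteq> {x. a \<bullet> x = b}"
        by (rule hull_minimal) (use ab(3) affine_hyperplane in auto)
      ultimately have "a \<bullet> y = b" by auto
      moreover have "a \<bullet> y = a \<bullet> C + u * (a \<bullet> A - a \<bullet> C)"
        by (simp add: y_def inner_add_right inner_diff_right)
      moreover have "u * (a \<bullet> A - a \<bullet> C) \<le> 0" using u0 aA by (simp add: mult_nonneg_nonpos)
      ultimately show False using aC by linarith
    qed
  qed
  define p where "p G = (x, ell \<sigma> G x)" for G
  have seg: "closed_segment C A \<inter> affine hull G = {p G}" if sG: "sfacet \<sigma> G" for G
  proof -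
    have cs: "closed_segment C A = {(x, h - u * \<sigma> * T) | u. 0 \<le> u \<and> u \<le> 1}"
      unfolding closed_segment_def C_def A_def by (auto simp: algebra_simps)
    have hG: "affine hull G = {z. snd z = ell \<sigma> G (fst z)}" by (rule hull_sfacet_ell[OF sG s])
    show ?thesis
    proof
      show "closed_segment C A \<inter> affine hull G \<subseteq> {p G}"
        unfolding cs hG p_def by auto
      define u0 where "u0 = \<sigma> * (h - ell \<sigma> G x) / T"
      have "0 \<le> u0" "u0 \<le> 1" using pos[OF sG] lt[OF sG] T0 by (auto simp: u0_def)
      moreover have "h - u0 * \<sigma> * T = ell \<sigma> G x"
        using T0 ss by (simp add: u0_def field_simps) (simp add: algebra_simps flip: mult.assoc)
      ultimately have "p G \<in> closed_segment C A" unfolding cs p_def by (smt (verit) mem_Collect_eq)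
      moreover have "p G \<in> affine hull G" unfolding hG p_def by simp
      ultimately show "{p G} \<subseteq> closed_segment C A \<inter> affine hull G" by simp
    qed
  qed
  have inj: "inj_on p {G. sfacet \<sigma> G}"
  proof (rule inj_onI)
    fix G G' assume "G \<in> {G. sfacet \<sigma> G}" "G' \<in> {G. sfacet \<sigma> G}" "p G = p G'"
    then show "G = G'" using dst[of G G'] by (simp add: p_def)
  qed
  have dC: "dist C (p G) = \<sigma> * (h - ell \<sigma> G x)" if "sfacet \<sigma> G" for G
  proof -
    have "dist C (p G) = \<bar>h - ell \<sigma> G x\<bar>"
      by (simp add: C_def p_def dist_Pair_Pair dist_real_def)
    then show ?thesis using pos[OF that] sig_abs[OF s, of "h - ell \<sigma> G x"] by linarith
  qed
  have last: "dist C (p G) < dist C (p F)" if "sfacet \<sigma> G" "G \<noteq> F" for G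
  proof -
    have "\<sigma> * ell \<sigma> F x \<noteq> \<sigma> * ell \<sigma> G x"
      using dst[OF F that(1)] that(2) s by auto
    then have "\<sigma> * ell \<sigma> F x < \<sigma> * ell \<sigma> G x" using Fmin[OF that(1)] by linarith
    then show ?thesis using dC[OF that(1)] dC[OF F] by (simp add: algebra_simps)
  qed
  have 1: "\<forall>G. G facet_of Q \<longrightarrow> (visible_from Q G A \<longleftrightarrow> sfacet \<sigma> G)" using vis by blast
  have 2: "C \<in> interior Q" using C by (simp add: C_def)
  have 3: "(\<forall>G. sfacet \<sigma> G \<longrightarrow> closed_segment C A \<inter> affine hull G = {p G}) \<and>
                 inj_on p {G. sfacet \<sigma> G} \<and>
                 (\<forall>G. sfacet \<sigma> G \<and> G \<noteq> F \<longrightarrow> dist C (p G) < dist C (p F))"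
    using seg inj last by blast
  show ?thesis
    unfolding BM_last_def
    using F 1 2 3 by blast
qed

end

context setting begin

lemma lowest:
  assumes s: "\<sigma> \<in> {1,-1}" and C: "C \<in> interior Q"
  shows "\<exists>G. sfacet \<sigma> G \<and> (fst C, ell \<sigma> G (fst C)) \<in> G"
proof -
  obtain B where B: "\<forall>z\<in>Q. norm z \<le> B"
    using compact_imp_bounded[OF compQ] bounded_iff by blast
  define R where "R = B + norm C + 1"
  define D where "D = C - (0, \<sigma> * R)"
  have CQ: "C \<in> Q" using C interior_subset by blast
  have "B \<ge> 0" using B CQ norm_ge_zero by (meson order_trans)
  then have R0: "R > 0" unfolding R_def using norm_ge_zero[of C] by linarith
  have "D \<notin> Q"
  proof
    assume "D \<in> Q"
    then have "norm D \<le> B" using B by blast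
    moreover have "\<bar>snd D\<bar> \<le> norm D" using norm_snd_le[of "snd D" "fst D"] by simp
    moreover have "\<bar>snd C\<bar> \<le> norm C" using norm_snd_le[of "snd C" "fst C"] by simp
    moreover have "snd D = snd C - \<sigma> * R" by (simp add: D_def)
    moreover have "\<bar>\<sigma> * R\<bar> = R" using s R0 by auto
    ultimately show False unfolding R_def by linarith
  qed
  then have "closed_segment C D \<inter> frontier Q \<noteq> {}"
    using CQ by (intro connected_Int_frontier) auto
  then obtain q where q: "q \<in> closed_segment C D" "q \<in> frontier Q" by blast
  have qQ: "q \<in> Q - interior Q" using q(2) closedQ by (simp add: frontier_def)
  then have "q \<in> Q - rel_interior Q" using rel_interior_interior[OF affQ] by simp
  then obtain G where G: "G facet_of Q" "q \<in> G"
    using rel_boundary_of_polyhedron[OF polyhQ] by blast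
  obtain a b where ab: "a \<noteq> 0" "Q \<subseteq> {x. a \<bullet> x \<le> b}" "G = Q \<inter> {x. a \<bullet> x = b}"
    using facet_of_polyhedron[OF polyhQ G(1)] by metis
  obtain u where u: "0 \<le> u" "u \<le> 1" "q = (1 - u) *\<^sub>R C + u *\<^sub>R D"
    using q(1) unfolding closed_segment_def by blast
  have "u \<noteq> 0" using u qQ C by auto
  then have u0: "u > 0" using u by simp
  have aC: "a \<bullet> C < b" using interior_strict[OF ab(2) ab(1) C] .
  have aq: "a \<bullet> q = b" using G(2) ab(3) by auto
  have "a \<bullet> q = a \<bullet> C - u * R * (\<sigma> * snd a)"
    by (cases a) (simp add: u(3) D_def algebra_simps inner_diff_right)
  then have "u * R * (\<sigma> * snd a) < 0" using aq aC by linarith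
  then have "\<sigma> * snd a < 0" using u0 R0 by (simp add: mult_less_0_iff zero_less_mult_iff)
  then have sG: "sfacet \<sigma> G" unfolding sfacet_def using G(1) ab by blast
  have fq: "fst q = fst C" by (simp add: u(3) D_def algebra_simps)
  have "snd q = ell \<sigma> G (fst q)" using ell_G[OF sG s] G(2) qQ by blast
  then have "(fst C, ell \<sigma> G (fst C)) = q" using fq by (metis prod.collapse)
  then show ?thesis using sG G(2) by auto
qed

lemma cover:
  assumes s: "\<sigma> \<in> {1,-1}" and v: "v \<in> V"
  shows "\<exists>G. sfacet \<sigma> G \<and> lift v \<in> G"
proof -
  obtain C0 where C0: "C0 \<in> interior Q" using intQ by blast
  define Ct where "Ct t = (1 - t) *\<^sub>R C0 + t *\<^sub>R lift v" for t :: real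
  have lvQ: "lift v \<in> Q" by (rule liftQ[OF v])
  have Ct_int: "Ct t \<in> interior Q" if "t \<in> {0..<1}" for t
  proof (cases "t = 0 \<or> C0 = lift v")
    case True then show ?thesis using C0 by (auto simp: Ct_def algebra_simps)
  next
    case False
    then have "Ct t \<in> open_segment C0 (lift v)"
      using that unfolding Ct_def in_segment by (intro conjI exI[of _ t]) auto
    moreover have "lift v \<in> closure Q" using lvQ closure_subset by blast
    ultimately show ?thesis using in_interior_closure_convex_segment[OF convQ C0] by blast
  qed
  define f where "f G t = (fst (Ct t), ell \<sigma> G (fst (Ct t)))" for G t
  define K where "K = (\<Union>G\<in>{G. sfacet \<sigma> G}. f G -` Q)"
  have contf: "continuous_on UNIV (f G)" for G
  proof -
    have c1: "continuous_on UNIV (\<lambda>t. fst (Ct t))" unfolding Ct_def by (intro continuous_intros)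
    have c2: "continuous_on UNIV (\<lambda>t. ell \<sigma> G (fst (Ct t)))"
      by (rule continuous_on_compose2[OF ell_cont c1]) auto
    show ?thesis unfolding f_def by (rule continuous_on_Pair[OF c1 c2])
  qed
  have "closed K" unfolding K_def
    by (intro closed_UN finFs ballI closed_vimage closedQ contf)
  have "{0..<1} \<subseteq> K"
  proof
    fix t :: real assume "t \<in> {0..<1}"
    then obtain G where "sfacet \<sigma> G" "(fst (Ct t), ell \<sigma> G (fst (Ct t))) \<in> G"
      using lowest[OF s Ct_int] by blast
    then show "t \<in> K" unfolding K_def f_def using facet_of_imp_subset[of G Q]
      by (auto simp: sfacet_def)
  qed
  then have "closure {0..<(1::real)} \<subseteq> K" using \<open>closed K\<close> closure_minimal by blast
  then have "(1::real) \<in> K" by auto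
  then obtain G where G: "sfacet \<sigma> G" "f G 1 \<in> Q" unfolding K_def by blast
  have "f G 1 = (v, ell \<sigma> G v)" by (simp add: f_def Ct_def lift_def)
  then have "f G 1 = lift v" using fiber[OF G(2) v] by simp
  then have "lift v \<in> G" using ell_G[OF G(1) s lvQ] G(2) \<open>f G 1 = (v, ell \<sigma> G v)\<close>
    by (simp add: lift_def)
  then show ?thesis using G(1) by blast
qed

end

lemma interior_Union_closed_empty:
  "finite F \<Longrightarrow> (\<And>S. S \<in> F \<Longrightarrow> closed S \<and> interior S = {}) \<Longrightarrow> interior (\<Union>F) = {}"
  for F :: "'b::real_normed_vector set set"
  by (induction F rule: finite_induct) (auto simp: interior_closed_Un_empty_interior)

context setting begin

lemma facet_eq_ell:
  assumes s: "\<sigma> \<in> {1,-1}" and G: "sfacet \<sigma> G" and G': "sfacet \<sigma> G'"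
    and e: "\<And>y. ell \<sigma> G y = ell \<sigma> G' y"
  shows "G = G'"
proof -
  have "G \<subseteq> Q" "G' \<subseteq> Q" using G G' by (auto simp: sfacet_def dest: facet_of_imp_subset)
  moreover have "z \<in> G \<longleftrightarrow> z \<in> G'" if "z \<in> Q" for z
    using ell_G[OF G s that] ell_G[OF G' s that] e by simp
  ultimately show ?thesis by blast
qed

lemma bad_set:
  assumes s: "\<sigma> \<in> {1,-1}" and G: "sfacet \<sigma> G" and G': "sfacet \<sigma> G'" and ne: "G \<noteq> G'"
  shows "closed {y. ell \<sigma> G y = ell \<sigma> G' y} \<and> interior {y. ell \<sigma> G y = ell \<sigma> G' y} = {}"
proof
  show "closed {y. ell \<sigma> G y = ell \<sigma> G' y}" by (intro closed_Collect_eq ell_cont)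
  define k1 where "k1 = snd (rep \<sigma> G) / snd (fst (rep \<sigma> G))"
  define k2 where "k2 = snd (rep \<sigma> G') / snd (fst (rep \<sigma> G'))"
  define d1 where "d1 = fst (fst (rep \<sigma> G)) /\<^sub>R snd (fst (rep \<sigma> G))"
  define d2 where "d2 = fst (fst (rep \<sigma> G')) /\<^sub>R snd (fst (rep \<sigma> G'))"
  have eq: "{y. ell \<sigma> G y = ell \<sigma> G' y} = {y. (d2 - d1) \<bullet> y = k2 - k1}"
    by (auto simp: ell_linear k1_def k2_def d1_def d2_def inner_diff_left)
  show "interior {y. ell \<sigma> G y = ell \<sigma> G' y} = {}"
  proof (cases "d2 - d1 = 0")
    case False then show ?thesis unfolding eq by simp
  next
    case True
    have "k2 - k1 \<noteq> 0"
    proof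
      assume "k2 - k1 = 0"
      then have "\<And>y. ell \<sigma> G y = ell \<sigma> G' y" using eq True by auto
      then show False using facet_eq_ell[OF s G G'] ne by blast
    qed
    then show ?thesis unfolding eq using True by simp
  qed
qed

lemma near_vertex:
  assumes s: "\<sigma> \<in> {1,-1}" and v: "v \<in> V" and G1: "sfacet \<sigma> G1" and nv: "lift v \<notin> G1"
  shows "\<exists>F. BM_last Q (sfacet \<sigma>) F \<and> sfacet \<sigma> F \<and> lift v \<notin> F"
proof -
  define Fs where "Fs = {G. sfacet \<sigma> G}"
  have finF: "finite Fs" using finFs by (simp add: Fs_def)
  have lvQ: "lift v \<in> Q" by (rule liftQ[OF v])
  have lv: "fst (lift v) = v" "snd (lift v) = (norm v)\<^sup>2" by (auto simp: lift_def)
  define \<epsilon> where "\<epsilon> = \<sigma> * (norm v)\<^sup>2 - \<sigma> * ell \<sigma> G1 v"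
  have "\<sigma> * ell \<sigma> G1 v \<le> \<sigma> * (norm v)\<^sup>2" using ell_Q[OF G1 s lvQ] lv by simp
  moreover have "ell \<sigma> G1 v \<noteq> (norm v)\<^sup>2" using ell_G[OF G1 s lvQ] nv lv by simp
  ultimately have "\<sigma> * ell \<sigma> G1 v < \<sigma> * (norm v)\<^sup>2" using s by auto
  then have e0: "\<epsilon> > 0" by (simp add: \<epsilon>_def)
  define U where "U = fst ` interior Q"
  have oU: "open U" unfolding U_def by (intro open_image_fst open_interior)
  have "lift v \<in> closure (interior Q)" using convex_closure_interior[OF convQ intQ] lvQ closure_subset by blast
  moreover have "fst ` closure (interior Q) \<subseteq> closure U"
    unfolding U_def
  proof (rule image_closure_subset)
    show "fst ` interior Q \<subseteq> closure (fst ` interior Q)" by (rule closure_subset)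
  qed (auto intro: continuous_intros)
  ultimately have vU: "v \<in> closure U" using lv by force
  define W where "W = (\<Inter>G\<in>Fs. {y. \<bar>ell \<sigma> G y - ell \<sigma> G v\<bar> < \<epsilon> / 2})"
  have oW: "open W" unfolding W_def
  proof (intro open_INT finF ballI open_Collect_less)
    fix G show "continuous_on UNIV (\<lambda>y. \<bar>ell \<sigma> G y - ell \<sigma> G v\<bar>)"
      by (intro continuous_on_rabs continuous_on_diff ell_cont continuous_on_const)
  qed (intro continuous_on_const)
  have vW: "v \<in> W" using e0 by (simp add: W_def)
  have "W \<inter> U \<noteq> {}" using open_Int_closure_eq_empty[OF oW, of U] vU vW by blast
  define B where "B = \<Union>((\<lambda>(G,G'). {y. ell \<sigma> G y = ell \<sigma> G' y}) ` {(G,G'). G \<in> Fs \<and> G' \<in> Fs \<and> G \<noteq> G'})"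
  have iB: "interior B = {}" unfolding B_def
  proof (rule interior_Union_closed_empty)
    show "finite ((\<lambda>(G,G'). {y. ell \<sigma> G y = ell \<sigma> G' y}) ` {(G,G'). G \<in> Fs \<and> G' \<in> Fs \<and> G \<noteq> G'})"
      by (rule finite_imageI, rule finite_subset[of _ "Fs \<times> Fs"]) (use finF in auto)
  next
    fix S assume "S \<in> (\<lambda>(G,G'). {y. ell \<sigma> G y = ell \<sigma> G' y}) ` {(G,G'). G \<in> Fs \<and> G' \<in> Fs \<and> G \<noteq> G'}"
    then obtain G G' where "G \<in> Fs" "G' \<in> Fs" "G \<noteq> G'" "S = {y. ell \<sigma> G y = ell \<sigma> G' y}" by auto
    then show "closed S \<and> interior S = {}" using bad_set[OF s] by (simp add: Fs_def)
  qed
  have "\<not> (W \<inter> U \<subseteq> B)"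
  proof
    assume "W \<inter> U \<subseteq> B"
    then have "W \<inter> U \<subseteq> interior B" using oW oU by (intro interior_maximal) auto
    then show False using iB \<open>W \<inter> U \<noteq> {}\<close> by blast
  qed
  then obtain x where x: "x \<in> W" "x \<in> U" "x \<notin> B" by blast
  then obtain C where C: "C \<in> interior Q" "fst C = x" unfolding U_def by blast
  define h where "h = snd C"
  have xh: "(x, h) \<in> interior Q" using C unfolding h_def by (metis prod.collapse)
  have dst: "G = G'" if "sfacet \<sigma> G" "sfacet \<sigma> G'" "ell \<sigma> G x = ell \<sigma> G' x" for G G'
  proof (rule ccontr)
    assume "G \<noteq> G'"
    then have "x \<in> B" unfolding B_def using that by (auto simp: Fs_def)
    then show False using x by blast
  qed
  have "Fs \<noteq> {}" using G1 by (auto simp: Fs_def)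
  define m where "m = Min ((\<lambda>G. \<sigma> * ell \<sigma> G x) ` Fs)"
  have "m \<in> (\<lambda>G. \<sigma> * ell \<sigma> G x) ` Fs" unfolding m_def using finF \<open>Fs \<noteq> {}\<close> by (intro Min_in) auto
  then obtain F where F: "F \<in> Fs" "\<sigma> * ell \<sigma> F x = m" by blast
  have Fmin: "\<sigma> * ell \<sigma> F x \<le> \<sigma> * ell \<sigma> G x" if "sfacet \<sigma> G" for G
    unfolding F(2) m_def using finF that by (intro Min_le) (auto simp: Fs_def)
  have sF: "sfacet \<sigma> F" using F by (simp add: Fs_def)
  have BM: "BM_last Q (sfacet \<sigma>) F" by (rule ear_for_x[OF s xh dst sF Fmin])
  have "lift v \<notin> F"
  proof
    assume "lift v \<in> F"
    then have eqF: "ell \<sigma> F v = (norm v)\<^sup>2" using ell_G[OF sF s lvQ] lv by simp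
    have a1: "\<bar>ell \<sigma> F x - ell \<sigma> F v\<bar> < \<epsilon> / 2" using x(1) F(1) by (simp add: W_def)
    have a2: "\<bar>ell \<sigma> G1 x - ell \<sigma> G1 v\<bar> < \<epsilon> / 2" using x(1) G1 by (simp add: W_def Fs_def)
    have b1: "\<sigma> * ell \<sigma> F v < \<sigma> * ell \<sigma> F x + \<epsilon> / 2"
    proof -
      have "\<bar>\<sigma> * ell \<sigma> F x - \<sigma> * ell \<sigma> F v\<bar> < \<epsilon> / 2"
        using a1 sig_abs[OF s, of "ell \<sigma> F x - ell \<sigma> F v"] by (simp add: right_diff_distrib)
      then show ?thesis unfolding abs_less_iff by linarith
    qed
    have b2: "\<sigma> * ell \<sigma> G1 x < \<sigma> * ell \<sigma> G1 v + \<epsilon> / 2"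
    proof -
      have "\<bar>\<sigma> * ell \<sigma> G1 x - \<sigma> * ell \<sigma> G1 v\<bar> < \<epsilon> / 2"
        using a2 sig_abs[OF s, of "ell \<sigma> G1 x - ell \<sigma> G1 v"] by (simp add: right_diff_distrib)
      then show ?thesis unfolding abs_less_iff by linarith
    qed
    have "\<sigma> * ell \<sigma> F v < \<sigma> * (norm v)\<^sup>2"
    proof -
      have "\<sigma> * (norm v)\<^sup>2 = \<sigma> * ell \<sigma> G1 v + \<epsilon>" by (simp add: \<epsilon>_def)
      then show ?thesis using b1 b2 Fmin[OF G1] by linarith
    qed
    then show False using eqF by simp
  qed
  then show ?thesis using BM sF by blast
qed

end

context setting begin

lemma two_ears:
  assumes s: "\<sigma> \<in> {1,-1}" and Vne: "V \<noteq> {}"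
  shows "\<exists>F1 F2. BM_last Q (sfacet \<sigma>) F1 \<and> BM_last Q (sfacet \<sigma>) F2 \<and> fst ` F1 \<noteq> fst ` F2"
proof -
  obtain v0 where "v0 \<in> V" using Vne by blast
  then obtain G0 where G0: "sfacet \<sigma> G0" using cover[OF s] by blast
  have G0f: "G0 facet_of Q" using G0 by (simp add: sfacet_def)
  have "\<exists>v\<in>V. lift v \<notin> G0"
  proof (rule ccontr)
    assume "\<not> ?thesis"
    then have "lift ` V \<subseteq> G0" by blast
    moreover have "convex G0" using G0f face_of_imp_convex facet_of_imp_face_of by blast
    ultimately have "Q \<subseteq> G0" unfolding Qdef by (rule hull_minimal)
    then have "G0 = Q" using facet_of_imp_subset[OF G0f] by blast
    then show False using G0f by simp
  qed
  then obtain v where v: "v \<in> V" "lift v \<notin> G0" by blast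
  obtain F1 where F1: "BM_last Q (sfacet \<sigma>) F1" "sfacet \<sigma> F1" "lift v \<notin> F1"
    using near_vertex[OF s v(1) G0 v(2)] by blast
  have F1f: "F1 facet_of Q" using F1(2) by (simp add: sfacet_def)
  have "\<exists>w\<in>V. lift w \<in> F1 \<and> (\<exists>G. sfacet \<sigma> G \<and> lift w \<notin> G)"
  proof (rule ccontr)
    assume H: "\<not> ?thesis"
    have "compact (lift ` V)" using finV by (simp add: finite_imp_compact)
    moreover have "F1 face_of convex hull (lift ` V)" using F1f Qdef facet_of_imp_face_of by simp
    ultimately obtain S' where S': "S' \<subseteq> lift ` V" "F1 = convex hull S'"
      by (rule face_of_convex_hull_subset)
    have all: "G = F1" if G: "sfacet \<sigma> G" for G
    proof -
      have Gf: "G facet_of Q" using G by (simp add: sfacet_def)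
      have "S' \<subseteq> G"
      proof
        fix z assume "z \<in> S'"
        then obtain w where w: "w \<in> V" "z = lift w" using S' by blast
        have "S' \<subseteq> F1" unfolding S'(2) by (rule hull_subset)
        then have "lift w \<in> F1" using \<open>z \<in> S'\<close> w(2) by auto
        then show "z \<in> G" using H w G by blast
      qed
      moreover have "convex G" using Gf face_of_imp_convex facet_of_imp_face_of by blast
      ultimately have sub: "F1 \<subseteq> G" unfolding S'(2) by (rule hull_minimal)
      have "F1 face_of G"
        using face_of_subset[OF facet_of_imp_face_of[OF F1f] sub facet_of_imp_subset[OF Gf]] .
      show "G = F1"
      proof (rule ccontr)
        assume "G \<noteq> F1"
        then have "aff_dim F1 < aff_dim G"
          using face_of_aff_dim_lt[OF \<open>convex G\<close> \<open>F1 face_of G\<close>] by auto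
        then show False using F1f Gf by (simp add: facet_of_def)
      qed
    qed
    obtain G where "sfacet \<sigma> G" "lift v \<in> G" using cover[OF s v(1)] by blast
    then show False using all F1(3) by blast
  qed
  then obtain w G where w: "w \<in> V" "lift w \<in> F1" "sfacet \<sigma> G" "lift w \<notin> G" by blast
  obtain F2 where F2: "BM_last Q (sfacet \<sigma>) F2" "sfacet \<sigma> F2" "lift w \<notin> F2"
    using near_vertex[OF s w(1) w(3) w(4)] by blast
  have "w \<in> fst ` F1" using w(2) by (force simp: lift_def)
  moreover have "w \<notin> fst ` F2"
  proof
    assume "w \<in> fst ` F2"
    then obtain z where z: "z \<in> F2" "fst z = w" by blast
    have "z \<in> Q" using z(1) F2(2) facet_of_imp_subset by (auto simp: sfacet_def)
    then have "z = lift w" using fiber w(1) z(2) by blast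
    then show False using z(1) F2(3) by simp
  qed
  ultimately show ?thesis using F1(1) F2(1) by blast
qed

end

lemma fiber_lemma:
  fixes P :: "'a::euclidean_space set"
  assumes "convex P" "polytope P" and z: "z \<in> lifted_polytope P" and w: "w \<in> vertices P"
    and zw: "fst z = w"
  shows "z = lift w"
proof -
  let ?Q = "lifted_polytope P"
  note bs = basic_setup[OF assms(1,2)]
  have wext: "w extreme_point_of P" using w by (simp add: vertices_def)
  define Qw where "Qw = ?Q \<inter> {z. fst z = w}"
  have cw: "convex {z::'a\<times>real. fst z = w}"
    unfolding convex_def by (auto simp flip: scaleR_add_left)
  have face: "Qw face_of ?Q"
    unfolding face_of_def
  proof (intro conjI ballI impI)
    show "Qw \<subseteq> ?Q" by (simp add: Qw_def)
    show "convex Qw" unfolding Qw_def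
      by (intro convex_Int cw) (simp add: lifted_polytope_def)
  next
    fix a b x assume ab: "a \<in> ?Q" "b \<in> ?Q" "x \<in> Qw" "x \<in> open_segment a b"
    obtain u where u: "0 < u" "u < 1" "x = (1 - u) *\<^sub>R a + u *\<^sub>R b"
      using ab(4) by (auto simp: in_segment)
    have fx: "fst x = w" using ab(3) by (simp add: Qw_def)
    have fP: "fst a \<in> P" "fst b \<in> P" using ab(1,2) bs(4) by auto
    have eq: "w = (1 - u) *\<^sub>R fst a + u *\<^sub>R fst b" using fx u(3) by simp
    have "fst a = w \<and> fst b = w"
    proof (cases "fst a = fst b")
      case True then show ?thesis using eq by (simp flip: scaleR_add_left)
    next
      case False
      then have "w \<in> open_segment (fst a) (fst b)" using eq u(1,2) by (auto simp: in_segment)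
      then show ?thesis using wext fP unfolding extreme_point_of_def by blast
    qed
    then show "a \<in> Qw" "b \<in> Qw" using ab(1,2) by (auto simp: Qw_def)
  qed
  have cQw: "compact Qw" unfolding Qw_def
    by (intro compact_Int_closed closed_Collect_eq continuous_intros polytope_imp_compact bs(3))
  have "convex Qw" using face face_of_imp_convex by blast
  have ext: "{x. x extreme_point_of Qw} \<subseteq> {lift w}"
  proof
    fix x assume "x \<in> {x. x extreme_point_of Qw}"
    then have "x extreme_point_of ?Q" "x \<in> Qw" using extreme_point_of_face[OF face] by auto
    then have "x \<in> lift ` vertices P" unfolding lifted_polytope_def
      using extreme_point_of_convex_hull by blast
    then obtain u where "x = lift u" by blast
    then show "x \<in> {lift w}" using \<open>x \<in> Qw\<close> by (simp add: Qw_def lift_def)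
  qed
  have "Qw = convex hull {x. x extreme_point_of Qw}"
    by (rule Krein_Milman_Minkowski[OF cQw \<open>convex Qw\<close>])
  also have "\<dots> \<subseteq> convex hull {lift w}" by (rule hull_mono[OF ext])
  also have "\<dots> = {lift w}" by simp
  finally have "Qw \<subseteq> {lift w}" .
  moreover have "z \<in> Qw" using z zw by (simp add: Qw_def)
  ultimately show ?thesis by blast
qed

theorem mainTheorem4:
  fixes P :: "'a::euclidean_space set"
  assumes "DIM('a) \<ge> 2"
    and "convex P" and "polytope P" and "aff_dim P = int DIM('a)"
    and "simplicial_polytope P"
    and "generic_polytope P"
  shows "(\<exists>S1 S2. S1 \<noteq> S2 \<and> delaunay_BM_ear P S1 \<and> delaunay_BM_ear P S2) \<and>
         (\<exists>S1 S2. S1 \<noteq> S2 \<and> upper_delaunay_BM_ear P S1 \<and> upper_delaunay_BM_ear P S2)"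
proof -
  note bs = basic_setup[OF assms(2,3)]
  let ?Q = "lifted_polytope P" and ?V = "vertices P"
  have st: "setting ?Q ?V"
  proof
    show "finite ?V" by (rule bs(1))
    show "?Q = convex hull (lift ` ?V)" by (simp add: lifted_polytope_def)
    show "interior ?Q \<noteq> {}" by (rule full_dim[OF assms(2,3,4,6)])
    show "z = lift w" if "z \<in> ?Q" "w \<in> ?V" "fst z = w" for z w
      by (rule fiber_lemma[OF assms(2,3) that])
  qed
  have "P \<noteq> {}" using assms(4) by auto
  then have Vne: "?V \<noteq> {}" using bs(2) by auto
  have low: "lower_facet ?Q = setting.sfacet ?Q 1"
    by (rule ext) (simp add: lower_facet_def setting.sfacet_def[OF st])
  have up: "upper_facet ?Q = setting.sfacet ?Q (-1)"
    by (rule ext) (simp add: upper_facet_def setting.sfacet_def[OF st])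
  have "\<exists>F1 F2. BM_last ?Q (setting.sfacet ?Q 1) F1 \<and> BM_last ?Q (setting.sfacet ?Q 1) F2 \<and> fst ` F1 \<noteq> fst ` F2"
    by (rule setting.two_ears[OF st]) (use Vne in auto)
  then obtain F1 F2 where F: "BM_last ?Q (lower_facet ?Q) F1" "BM_last ?Q (lower_facet ?Q) F2"
    "fst ` F1 \<noteq> fst ` F2" unfolding low by blast
  have "\<exists>F1 F2. BM_last ?Q (setting.sfacet ?Q (-1)) F1 \<and> BM_last ?Q (setting.sfacet ?Q (-1)) F2 \<and> fst ` F1 \<noteq> fst ` F2"
    by (rule setting.two_ears[OF st]) (use Vne in auto)
  then obtain U1 U2 where U: "BM_last ?Q (upper_facet ?Q) U1" "BM_last ?Q (upper_facet ?Q) U2"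
    "fst ` U1 \<noteq> fst ` U2" unfolding up by blast
  show ?thesis
    unfolding delaunay_BM_ear_def upper_delaunay_BM_ear_def
    using F U by blast
qed


end
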